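(* Let $X=(X_k)$ be a sequence of fuzzy numbers, $\theta=(k_r)$ a lacunary sequence, $m\ge0$ an integer, $p>0$ and $\beta\in(0,1]$. If $X\in w_p^\beta(F,\Delta^m)\cap N_\theta^\beta(p,F,\Delta^m)$ and $\limsup_r\frac{k_r}{k_{r-1}^\beta}<\infty$, then the $w_p^\beta(F,\Delta^m)$-limit and the $N_\theta^\beta(p,F,\Delta^m)$-limit of $X$ coincide.
   Context: A fuzzy number is a map $X:\mathbb{R}\to[0,1]$ which is normal, fuzzy convex, upper semicontinuous, with compact closure of $\{t:X(t)>0\}$; $L(\mathbb{R})$ is the set of fuzzy numbers. Level sets $[X]^\alpha=\{t:X(t)\ge\alpha\}$ ($\alpha\in(0,1]$), $[X]^0=\overline{\{t:X(t)>0\}}$, are compact intervals $[u^\alpha,v^\alpha]$. Subtraction: $[X-Y]^\alpha=[u_1^\alpha-v_2^\alpha,v_1^\alpha-u_2^\alpha]$. Metric: $d(X,Y)=\sup_{\alpha\in[0,1]}\max\{|u_1^\alpha-u_2^\alpha|,|v_1^\alpha-v_2^\alpha|\}$. $(\Delta^0X)_k=X_k$, $(\Delta^1X)_k=X_k-X_{k+1}$, $(\Delta^mX)_k=(\Delta^1(\Delta^{m-1}X))_k$. A lacunary sequence is an increasing integer sequence $\theta=(k_r)_{r\ge0}$ with $k_0=0$, $h_r=k_r-k_{r-1}\to\infty$; $I_r=(k_{r-1},k_r]$. $X_0\in L(\mathbb{R})$ is an $N_\theta^\beta(p,F,\Delta^m)$-limit of $X$ if $\lim_r\frac{1}{h_r^\beta}\sum_{k\in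 I_r}d(\Delta^mX_k,X_0)^p=0$; $X_0$ is a $w_p^\beta(F,\Delta^m)$-limit of $X$ if $\lim_{n\to\infty}\frac{1}{n^\beta}\sum_{k=1}^n d(\Delta^mX_k,X_0)^p=0$; the spaces consist of sequences having such a limit. *)

theory Defs
  imports "HOL-Analysis.Analysis" "HOL-Library.Liminf_Limsup"
begin

type_synonym fuzzy = "real \<Rightarrow> real"

definition fuzzy_number :: "fuzzy \<Rightarrow> bool" where
  "fuzzy_number X \<longleftrightarrow>
     (\<forall>t. 0 \<le> X t \<and> X t \<le> 1) \<and>
     (\<exists>t. X t = 1) \<and>
     (\<forall>x y (l::real). 0 \<le> l \<and> l \<le> 1 \<longrightarrow> X (l * x + (1 - l) * y) \<ge> min (X x) (X y)) \<and>
     (\<forall>a. closed {t. a \<le> X t}) \<and>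
     compact (closure {t. X t > 0})"

definition level :: "fuzzy \<Rightarrow> real \<Rightarrow> real set" where
  "level X \<alpha> = (if \<alpha> = 0 then closure {t. X t > 0} else {t. X t \<ge> \<alpha>})"

definition lo :: "fuzzy \<Rightarrow> real \<Rightarrow> real" where
  "lo X \<alpha> = Inf (level X \<alpha>)"

definition up :: "fuzzy \<Rightarrow> real \<Rightarrow> real" where
  "up X \<alpha> = Sup (level X \<alpha>)"

text \<open>Subtraction: the fuzzy number whose \<alpha>-level sets (\<alpha> in (0,1]) are
  [lo X \<alpha> - up Y \<alpha>, up X \<alpha> - lo Y \<alpha>]; its membership function is
  recovered from its level sets by the usual representation theorem.\<close>
definition fuzzy_minus :: "fuzzy \<Rightarrow> fuzzy \<Rightarrow> fuzzy" where
  "fuzzy_minus X Y = (\<lambda>t. Sup (insert 0 {\<alpha>. 0 < \<alpha> \<and> \<alpha> \<le> 1 \<and>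
        lo X \<alpha> - up Y \<alpha> \<le> t \<and> t \<le> up X \<alpha> - lo Y \<alpha>}))"

definition fdist :: "fuzzy \<Rightarrow> fuzzy \<Rightarrow> real" where
  "fdist X Y = (SUP \<alpha>\<in>{0..1}. max \<bar>lo X \<alpha> - lo Y \<alpha>\<bar> \<bar>up X \<alpha> - up Y \<alpha>\<bar>)"

fun Delta :: "nat \<Rightarrow> (nat \<Rightarrow> fuzzy) \<Rightarrow> nat \<Rightarrow> fuzzy" where
  "Delta 0 X k = X k"
| "Delta (Suc m) X k = fuzzy_minus (Delta m X k) (Delta m X (Suc k))"

definition lacunary :: "(nat \<Rightarrow> nat) \<Rightarrow> bool" where
  "lacunary \<theta> \<longleftrightarrow> \<theta> 0 = 0 \<and> strict_mono \<theta> \<and>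
     filterlim (\<lambda>r. real (\<theta> (Suc r) - \<theta> r)) at_top sequentially"

text \<open>X0 is an N_\<theta>^\<beta>(p,F,\<Delta>^m)-limit of X (r runs over r \<ge> 1, written Suc r).\<close>
definition N_theta_limit ::
  "(nat \<Rightarrow> nat) \<Rightarrow> real \<Rightarrow> real \<Rightarrow> nat \<Rightarrow> (nat \<Rightarrow> fuzzy) \<Rightarrow> fuzzy \<Rightarrow> bool" where
  "N_theta_limit \<theta> \<beta> p m X X0 \<longleftrightarrow>
     (\<lambda>r. (1 / real (\<theta> (Suc r) - \<theta> r) powr \<beta>) *
        (\<Sum>k\<in>{\<theta> r<..\<theta> (Suc r)}. fdist (Delta m X k) X0 powr p)) \<longlonglongrightarrow> 0"

definition w_limit ::
  "real \<Rightarrow> real \<Rightarrow> nat \<Rightarrow> (nat \<Rightarrow> fuzzy) \<Rightarrow> fuzzy \<Rightarrow> bool" where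
  "w_limit \<beta> p m X X0 \<longleftrightarrow>
     (\<lambda>n. (1 / real n powr \<beta>) * (\<Sum>k=1..n. fdist (Delta m X k) X0 powr p)) \<longlonglongrightarrow> 0"

end

theory Submission
  imports Defs
begin

definition bnd :: "fuzzy \<Rightarrow> bool" where
  "bnd Y \<longleftrightarrow> (\<exists>M. \<forall>\<alpha>\<in>{0..1}. \<bar>lo Y \<alpha>\<bar> \<le> M \<and> \<bar>up Y \<alpha>\<bar> \<le> M)"

lemma level_sub: "\<alpha> \<in> {0..1} \<Longrightarrow> level Y \<alpha> \<subseteq> closure {t. Y t > 0}"
proof
  fix x assume a: "\<alpha> \<in> {0..1}" and x: "x \<in> level Y \<alpha>"
  show "x \<in> closure {t. Y t > 0}"
  proof (cases "\<alpha> = 0")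
    case True thus ?thesis using x by (simp add: level_def)
  next
    case False
    hence "Y x \<ge> \<alpha>" "\<alpha> > 0" using x a by (simp_all add: level_def)
    hence "Y x > 0" by linarith
    thus ?thesis by (intro subsetD[OF closure_subset]) simp
  qed
qed

lemma bnd_closure:
  assumes "bounded (closure {t. Y t > 0})"
  shows "bnd Y"
proof -
  obtain R where R: "\<forall>x\<in>closure {t. Y t > 0}. \<bar>x\<bar> \<le> R" using assms bounded_real by blast
  define M where "M = max R (max \<bar>Inf ({}::real set)\<bar> \<bar>Sup ({}::real set)\<bar>)"
  have "\<forall>\<alpha>\<in>{0..1}. \<bar>lo Y \<alpha>\<bar> \<le> M \<and> \<bar>up Y \<alpha>\<bar> \<le> M"
  proof
    fix \<alpha> :: real assume a: "\<alpha> \<in> {0..1}"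
    let ?S = "level Y \<alpha>"
    have S: "\<forall>x\<in>?S. \<bar>x\<bar> \<le> R" using level_sub[OF a] R by blast
    have S1: "x \<le> R" "-R \<le> x" if "x \<in> ?S" for x
    proof -
      have "\<bar>x\<bar> \<le> R" using S that by blast
      thus "x \<le> R" "-R \<le> x" by linarith+
    qed
    show "\<bar>lo Y \<alpha>\<bar> \<le> M \<and> \<bar>up Y \<alpha>\<bar> \<le> M"
    proof (cases "?S = {}")
      case True
      have "\<bar>Inf ({}::real set)\<bar> \<le> M" "\<bar>Sup ({}::real set)\<bar> \<le> M" unfolding M_def by simp_all
      thus ?thesis using True by (simp add: lo_def up_def)
    next
      case False
      then obtain x where x: "x \<in> ?S" by blast
      have bb1: "bdd_below ?S" by (rule bdd_belowI[where m="-R"]) (rule S1(2))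
      have bb2: "bdd_above ?S" by (rule bdd_aboveI[where M="R"]) (rule S1(1))
      have "Inf ?S \<le> x" by (rule cInf_lower[OF x bb1])
      moreover have "-R \<le> Inf ?S" by (rule cInf_greatest[OF False]) (rule S1(2))
      moreover have "x \<le> Sup ?S" by (rule cSup_upper[OF x bb2])
      moreover have "Sup ?S \<le> R" by (rule cSup_least[OF False]) (rule S1(1))
      moreover have "x \<le> R" "-R \<le> x" using S1 x by auto
      ultimately have "\<bar>Inf ?S\<bar> \<le> R" "\<bar>Sup ?S\<bar> \<le> R" by linarith+
      moreover have "R \<le> M" unfolding M_def by simp
      ultimately show ?thesis unfolding lo_def up_def by linarith
    qed
  qed
  thus ?thesis unfolding bnd_def by blast
qed

lemma bnd_fuzzy: "fuzzy_number X \<Longrightarrow> bnd X"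
  by (rule bnd_closure) (auto simp: fuzzy_number_def compact_imp_bounded)

lemma bnd_minus:
  assumes A: "bnd A" and B: "bnd B"
  shows "bnd (fuzzy_minus A B)"
proof -
  obtain MA where MA: "\<forall>\<alpha>\<in>{0..1}. \<bar>lo A \<alpha>\<bar> \<le> MA \<and> \<bar>up A \<alpha>\<bar> \<le> MA" using A bnd_def by blast
  obtain MB where MB: "\<forall>\<alpha>\<in>{0..1}. \<bar>lo B \<alpha>\<bar> \<le> MB \<and> \<bar>up B \<alpha>\<bar> \<le> MB" using B bnd_def by blast
  have sub: "{t. fuzzy_minus A B t > 0} \<subseteq> {-(MA+MB)..MA+MB}"
  proof
    fix t assume "t \<in> {t. fuzzy_minus A B t > 0}"
    hence pos: "Sup (insert 0 {\<alpha>. 0 < \<alpha> \<and> \<alpha> \<le> 1 \<and>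
        lo A \<alpha> - up B \<alpha> \<le> t \<and> t \<le> up A \<alpha> - lo B \<alpha>}) > 0"
      by (simp add: fuzzy_minus_def)
    have "{\<alpha>. 0 < \<alpha> \<and> \<alpha> \<le> 1 \<and> lo A \<alpha> - up B \<alpha> \<le> t \<and> t \<le> up A \<alpha> - lo B \<alpha>} \<noteq> {}"
    proof
      assume "{\<alpha>. 0 < \<alpha> \<and> \<alpha> \<le> 1 \<and> lo A \<alpha> - up B \<alpha> \<le> t \<and> t \<le> up A \<alpha> - lo B \<alpha>} = {}"
      with pos show False by simp
    qed
    then obtain \<alpha> where a: "0 < \<alpha>" "\<alpha> \<le> 1" "lo A \<alpha> - up B \<alpha> \<le> t" "t \<le> up A \<alpha> - lo B \<alpha>" by blast
    hence "\<alpha> \<in> {0..1}" by auto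
    hence "\<bar>lo A \<alpha>\<bar> \<le> MA" "\<bar>up A \<alpha>\<bar> \<le> MA" "\<bar>lo B \<alpha>\<bar> \<le> MB" "\<bar>up B \<alpha>\<bar> \<le> MB"
      using MA MB by auto
    with a show "t \<in> {-(MA+MB)..MA+MB}" by (simp add: abs_le_iff)
  qed
  have "closure {t. fuzzy_minus A B t > 0} \<subseteq> {-(MA+MB)..MA+MB}"
    by (rule closure_minimal[OF sub]) simp
  hence "bounded (closure {t. fuzzy_minus A B t > 0})"
    by (rule bounded_subset[OF bounded_closed_interval])
  thus ?thesis by (rule bnd_closure)
qed

lemma bnd_Delta: "(\<And>k. bnd (X k)) \<Longrightarrow> bnd (Delta m X k)"
  by (induction m arbitrary: k) (auto intro: bnd_minus)

lemma fdist_ge: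
  assumes Y: "bnd Y" and Z: "bnd Z" and a: "\<alpha> \<in> {0..1}"
  shows "\<bar>lo Y \<alpha> - lo Z \<alpha>\<bar> \<le> fdist Y Z \<and> \<bar>up Y \<alpha> - up Z \<alpha>\<bar> \<le> fdist Y Z"
proof -
  obtain MY where MY: "\<forall>\<alpha>\<in>{0..1}. \<bar>lo Y \<alpha>\<bar> \<le> MY \<and> \<bar>up Y \<alpha>\<bar> \<le> MY" using Y bnd_def by blast
  obtain MZ where MZ: "\<forall>\<alpha>\<in>{0..1}. \<bar>lo Z \<alpha>\<bar> \<le> MZ \<and> \<bar>up Z \<alpha>\<bar> \<le> MZ" using Z bnd_def by blast
  have "bdd_above ((\<lambda>\<alpha>. max \<bar>lo Y \<alpha> - lo Z \<alpha>\<bar> \<bar>up Y \<alpha> - up Z \<alpha>\<bar>) ` {0..1})"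
  proof (rule bdd_aboveI2)
    fix x :: real assume "x \<in> {0..1}"
    hence "\<bar>lo Y x\<bar> \<le> MY" "\<bar>up Y x\<bar> \<le> MY" "\<bar>lo Z x\<bar> \<le> MZ" "\<bar>up Z x\<bar> \<le> MZ"
      using MY MZ by auto
    thus "max \<bar>lo Y x - lo Z x\<bar> \<bar>up Y x - up Z x\<bar> \<le> MY + MZ"
      by (simp add: abs_le_iff)
  qed
  hence "max \<bar>lo Y \<alpha> - lo Z \<alpha>\<bar> \<bar>up Y \<alpha> - up Z \<alpha>\<bar> \<le> fdist Y Z"
    unfolding fdist_def using a by (rule cSUP_upper2) simp
  thus ?thesis by simp
qed

lemma fdist_nonneg: "bnd Y \<Longrightarrow> bnd Z \<Longrightarrow> 0 \<le> fdist Y Z"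
  using fdist_ge[of Y Z 0] by force

lemma fdist_tri:
  assumes "bnd Y" "bnd A" "bnd B"
  shows "fdist A B \<le> fdist Y A + fdist Y B"
  unfolding fdist_def[of A B]
proof (rule cSUP_least)
  fix \<alpha> :: real assume a: "\<alpha> \<in> {0..1}"
  show "max \<bar>lo A \<alpha> - lo B \<alpha>\<bar> \<bar>up A \<alpha> - up B \<alpha>\<bar> \<le> fdist Y A + fdist Y B"
  proof -
    have h: "\<bar>lo Y \<alpha> - lo A \<alpha>\<bar> \<le> fdist Y A" "\<bar>up Y \<alpha> - up A \<alpha>\<bar> \<le> fdist Y A"
      "\<bar>lo Y \<alpha> - lo B \<alpha>\<bar> \<le> fdist Y B" "\<bar>up Y \<alpha> - up B \<alpha>\<bar> \<le> fdist Y B"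
      using fdist_ge[OF assms(1,2) a] fdist_ge[OF assms(1,3) a] by simp_all
    have t: "\<bar>x - z\<bar> \<le> \<bar>y - x\<bar> + \<bar>y - z\<bar>" for x y z :: real by argo
    have "\<bar>lo A \<alpha> - lo B \<alpha>\<bar> \<le> fdist Y A + fdist Y B" using h(1,3) t[of "lo A \<alpha>" "lo Y \<alpha>" "lo B \<alpha>"] by argo
    moreover have "\<bar>up A \<alpha> - up B \<alpha>\<bar> \<le> fdist Y A + fdist Y B" using h(2,4) t[of "up A \<alpha>" "up Y \<alpha>" "up B \<alpha>"] by argo
    ultimately show ?thesis by simp
  qed
qed simp

lemma aux_comb: "(a::real) < b \<Longrightarrow> (b - t) / (b - a) * a + (1 - (b - t) / (b - a)) * b = t"
proof -
  assume "a < b"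
  hence ne: "b - a \<noteq> 0" by simp
  have g: "l * a + (1 - l) * b = b - l * (b - a)" for l :: real by (simp add: algebra_simps)
  have "(b - t) / (b - a) * a + (1 - (b - t) / (b - a)) * b = b - (b - t) / (b - a) * (b - a)"
    by (rule g)
  also have "\<dots> = t" using ne by simp
  finally show ?thesis .
qed

lemma level_eq:
  assumes X: "fuzzy_number X" and a: "0 < \<alpha>" "\<alpha> \<le> 1"
  shows "{t. \<alpha> \<le> X t} = {t. lo X \<alpha> \<le> t \<and> t \<le> up X \<alpha>}"
proof -
  let ?S = "{t. \<alpha> \<le> X t}"
  have lv: "level X \<alpha> = ?S" using a by (simp add: level_def)
  have cl: "closed ?S" using X by (simp add: fuzzy_number_def)
  obtain t1 where "X t1 = 1" using X by (auto simp: fuzzy_number_def)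
  hence "t1 \<in> ?S" using a by simp
  hence ne: "?S \<noteq> {}" by blast
  have "?S \<subseteq> {t. X t > 0}" using a by auto
  hence "?S \<subseteq> closure {t. X t > 0}" using closure_subset by (rule order_trans)
  moreover have "bounded (closure {t. X t > 0})" using X by (simp add: fuzzy_number_def compact_imp_bounded)
  ultimately have bd: "bounded ?S" by (rule bounded_subset[rotated])
  have bb: "bdd_below ?S" "bdd_above ?S"
    using bd by (auto simp: bounded_imp_bdd_below bounded_imp_bdd_above)
  have i: "Inf ?S \<in> ?S" by (rule closed_contains_Inf[OF ne bb(1) cl])
  have s: "Sup ?S \<in> ?S" by (rule closed_contains_Sup[OF ne bb(2) cl])
  have conv: "\<forall>x y (l::real). 0 \<le> l \<and> l \<le> 1 \<longrightarrow> X (l * x + (1 - l) * y) \<ge> min (X x) (X y)"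
    using X by (simp add: fuzzy_number_def)
  show ?thesis
  proof (rule set_eqI, rule iffI)
    fix t assume "t \<in> ?S"
    thus "t \<in> {t. lo X \<alpha> \<le> t \<and> t \<le> up X \<alpha>}"
      unfolding lo_def up_def lv using cInf_lower[OF _ bb(1)] cSup_upper[OF _ bb(2)] by auto
  next
    fix t assume "t \<in> {t. lo X \<alpha> \<le> t \<and> t \<le> up X \<alpha>}"
    hence t: "Inf ?S \<le> t" "t \<le> Sup ?S" unfolding lo_def up_def lv by auto
    show "t \<in> ?S"
    proof (cases "Inf ?S = Sup ?S")
      case True thus ?thesis using t s by (metis antisym)
    next
      case False
      hence lt: "Inf ?S < Sup ?S" using t by linarith
      define l where "l = (Sup ?S - t) / (Sup ?S - Inf ?S)"
      have l01: "0 \<le> l" "l \<le> 1" using t lt by (auto simp: l_def field_simps)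
      have "l * Inf ?S + (1 - l) * Sup ?S = t" unfolding l_def using lt by (rule aux_comb)
      hence "X t \<ge> min (X (Inf ?S)) (X (Sup ?S))" using conv l01 by metis
      thus ?thesis using i s by auto
    qed
  qed
qed

lemma fdist_zero:
  assumes X1: "fuzzy_number X1" and X2: "fuzzy_number X2" and d: "fdist X1 X2 = 0"
  shows "X1 = X2"
proof -
  have lv: "{t. \<alpha> \<le> X1 t} = {t. \<alpha> \<le> X2 t}" if a: "0 < \<alpha>" "\<alpha> \<le> 1" for \<alpha>
  proof -
    have "\<alpha> \<in> {0..1}" using a by auto
    hence "\<bar>lo X1 \<alpha> - lo X2 \<alpha>\<bar> \<le> 0" "\<bar>up X1 \<alpha> - up X2 \<alpha>\<bar> \<le> 0"
      using fdist_ge[OF bnd_fuzzy[OF X1] bnd_fuzzy[OF X2]] d by simp_all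
    hence "lo X1 \<alpha> = lo X2 \<alpha>" "up X1 \<alpha> = up X2 \<alpha>" by simp_all
    thus ?thesis using level_eq[OF X1 a] level_eq[OF X2 a] by simp
  qed
  have r1: "0 \<le> X1 t" "X1 t \<le> 1" "0 \<le> X2 t" "X2 t \<le> 1" for t
    using X1 X2 by (simp_all add: fuzzy_number_def)
  have le: "Z2 t \<le> Z1 t" if "{t. \<alpha> \<le> Z1 t} = {t. \<alpha> \<le> Z2 t}" "\<alpha> = Z2 t" for Z1 Z2 :: fuzzy and \<alpha> t
  proof -
    have "t \<in> {t. \<alpha> \<le> Z2 t}" using that(2) by simp
    hence "t \<in> {t. \<alpha> \<le> Z1 t}" using that(1) by simp
    thus ?thesis using that(2) by simp
  qed
  show ?thesis
  proof
    fix t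
    show "X1 t = X2 t"
    proof (cases "X1 t < X2 t")
      case True
      have a: "0 < X2 t" "X2 t \<le> 1" using r1[of t] True by linarith+
      have "X2 t \<le> X1 t" by (rule le[OF lv[OF a] refl])
      thus ?thesis using True by simp
    next
      case False
      show ?thesis
      proof (cases "X2 t < X1 t")
        case True
        have a: "0 < X1 t" "X1 t \<le> 1" using r1[of t] True by linarith+
        have "X1 t \<le> X2 t" by (rule le[OF lv[OF a, symmetric] refl])
        thus ?thesis using True by simp
      qed (use False in simp)
    qed
  qed
qed


lemma pw_ineq:
  assumes "bnd Y" "bnd A" "bnd B" "0 < (p::real)"
  shows "fdist A B powr p \<le> 2 powr p * (fdist Y A powr p + fdist Y B powr p)"
proof -
  let ?f = "fdist A B" and ?f1 = "fdist Y A" and ?f2 = "fdist Y B"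
  have n: "0 \<le> ?f" "0 \<le> ?f1" "0 \<le> ?f2" using assms fdist_nonneg by auto
  have t: "?f \<le> ?f1 + ?f2" using fdist_tri[OF assms(1-3)] .
  have "?f \<le> 2 * max ?f1 ?f2" using t by linarith
  hence "?f powr p \<le> (2 * max ?f1 ?f2) powr p" using n assms(4) by (intro powr_mono2) auto
  also have "\<dots> = 2 powr p * max ?f1 ?f2 powr p" using n by (simp add: powr_mult)
  also have "max ?f1 ?f2 powr p \<le> ?f1 powr p + ?f2 powr p"
    by (cases "?f1 \<le> ?f2") (simp_all add: max_def)
  hence "2 powr p * max ?f1 ?f2 powr p \<le> 2 powr p * (?f1 powr p + ?f2 powr p)"
    by (intro mult_left_mono) auto
  finally show ?thesis .
qed

lemma sum_split_ivl:
  assumes "(l::nat) \<le> m" "m \<le> u"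
  shows "sum f {l<..u} = sum f {l<..m} + sum f {m<..u}"
proof -
  have "{l<..u} = {l<..m} \<union> {m<..u}" using assms by auto
  moreover have "{l<..m} \<inter> {m<..u} = {}" by auto
  ultimately show ?thesis by (simp add: sum.union_disjoint)
qed

lemma main_contra:
  fixes a b :: "nat \<Rightarrow> real" and \<theta> :: "nat \<Rightarrow> nat" and D C \<beta> :: real
  assumes an: "\<And>k. 0 \<le> a k" and bn: "\<And>k. 0 \<le> b k"
    and D: "0 < D" and C: "0 < C" and key: "\<And>k. D \<le> C * (a k + b k)"
    and sm: "strict_mono \<theta>" and \<beta>: "0 < \<beta>" "\<beta> \<le> 1"
    and wa: "(\<lambda>n. (1 / real n powr \<beta>) * (\<Sum>k=1..n. a k)) \<longlonglongrightarrow> 0"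
    and nb: "(\<lambda>r. (1 / real (\<theta> (Suc r) - \<theta> r) powr \<beta>) *
        (\<Sum>k\<in>{\<theta> r<..\<theta> (Suc r)}. b k)) \<longlonglongrightarrow> 0"
  shows False
proof -
  define e where "e = D / (8 * C)"
  have e: "0 < e" using D C by (simp add: e_def)
  obtain n0 where n0: "\<And>n. n \<ge> n0 \<Longrightarrow> norm ((1 / real n powr \<beta>) * (\<Sum>k=1..n. a k) - 0) < e"
    using wa e unfolding LIMSEQ_iff by blast
  obtain r0 where r0: "\<And>r. r \<ge> r0 \<Longrightarrow> norm ((1 / real (\<theta> (Suc r) - \<theta> r) powr \<beta>) *
        (\<Sum>k\<in>{\<theta> r<..\<theta> (Suc r)}. b k) - 0) < e"
    using nb e unfolding LIMSEQ_iff by blast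
  have A: "(\<Sum>k=1..n. a k) \<le> e * real n" if "n \<ge> n0" "n \<ge> 1" for n
  proof -
    have rn: "1 \<le> real n" using that by simp
    have pp: "0 < real n powr \<beta>" using rn by simp
    have S0: "0 \<le> (\<Sum>k=1..n. a k)" using an by (simp add: sum_nonneg)
    have "(1 / real n powr \<beta>) * (\<Sum>k=1..n. a k) < e" using n0[OF that(1)] S0 pp by simp
    hence "(\<Sum>k=1..n. a k) < e * real n powr \<beta>" using pp by (simp add: field_simps)
    also have "real n powr \<beta> \<le> real n powr 1" using \<beta> rn by (intro powr_mono) auto
    hence "e * real n powr \<beta> \<le> e * real n" using e rn by simp
    finally show ?thesis by simp
  qed
  have B1: "(\<Sum>k\<in>{\<theta> r<..\<theta> (Suc r)}. b k) \<le> e * (real (\<theta> (Suc r)) - real (\<theta> r))" if "r \<ge> r0" for r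
  proof -
    have lt: "\<theta> r < \<theta> (Suc r)" using sm by (simp add: strict_mono_def)
    define h where "h = real (\<theta> (Suc r) - \<theta> r)"
    have h: "h = real (\<theta> (Suc r)) - real (\<theta> r)" using lt by (simp add: h_def of_nat_diff)
    have h1: "1 \<le> h" using lt by (simp add: h_def)
    have pp: "0 < h powr \<beta>" using h1 by simp
    have S0: "0 \<le> (\<Sum>k\<in>{\<theta> r<..\<theta> (Suc r)}. b k)" using bn by (simp add: sum_nonneg)
    have "(1 / h powr \<beta>) * (\<Sum>k\<in>{\<theta> r<..\<theta> (Suc r)}. b k) < e"
      using r0[OF that] S0 pp unfolding h_def by simp
    hence "(\<Sum>k\<in>{\<theta> r<..\<theta> (Suc r)}. b k) < e * h powr \<beta>" using pp by (simp add: field_simps)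
    also have "h powr \<beta> \<le> h powr 1" using \<beta> h1 by (intro powr_mono) auto
    hence "e * h powr \<beta> \<le> e * h" using e h1 by simp
    finally show ?thesis using h by simp
  qed
  have B: "(\<Sum>k\<in>{\<theta> r0<..\<theta> (r0 + d)}. b k) \<le> e * (real (\<theta> (r0 + d)) - real (\<theta> r0))" for d
  proof (induction d)
    case 0 thus ?case by simp
  next
    case (Suc d)
    have m1: "\<theta> r0 \<le> \<theta> (r0 + d)" using sm by (simp add: strict_mono_less_eq)
    have m2: "\<theta> (r0 + d) \<le> \<theta> (Suc (r0 + d))" using sm by (simp add: strict_mono_less_eq)
    have "(\<Sum>k\<in>{\<theta> r0<..\<theta> (r0 + Suc d)}. b k) =
      (\<Sum>k\<in>{\<theta> r0<..\<theta> (r0 + d)}. b k) + (\<Sum>k\<in>{\<theta> (r0+d)<..\<theta> (Suc (r0 + d))}. b k)"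
      using sum_split_ivl[OF m1 m2] by simp
    also have "\<dots> \<le> e * (real (\<theta> (r0 + d)) - real (\<theta> r0)) + e * (real (\<theta> (Suc (r0 + d))) - real (\<theta> (r0 + d)))"
      using Suc.IH B1[of "r0 + d"] by (intro add_mono) auto
    also have "\<dots> = e * (real (\<theta> (r0 + Suc d)) - real (\<theta> r0))" by (simp add: algebra_simps)
    finally show ?case .
  qed
  define d where "d = n0 + 2 * \<theta> r0 + 1"
  define n where "n = \<theta> (r0 + d)"
  have "r0 + d \<le> n" unfolding n_def using sm by (rule strict_mono_imp_increasing)
  hence nn: "n \<ge> n0" "n \<ge> 1" "n \<ge> 2 * \<theta> r0 + 1" unfolding d_def by auto
  define L where "L = real n - real (\<theta> r0)"
  have L: "0 < L" "real n \<le> 2 * L" using nn by (auto simp: L_def)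
  have "D * L = (\<Sum>k\<in>{\<theta> r0<..n}. D)" using nn by (simp add: L_def of_nat_diff)
  also have "\<dots> \<le> (\<Sum>k\<in>{\<theta> r0<..n}. C * (a k + b k))" by (rule sum_mono) (rule key)
  also have "\<dots> = C * ((\<Sum>k\<in>{\<theta> r0<..n}. a k) + (\<Sum>k\<in>{\<theta> r0<..n}. b k))"
    by (simp add: sum_distrib_left[symmetric] sum.distrib)
  also have "\<dots> \<le> C * (e * real n + e * L)"
  proof (intro mult_left_mono add_mono)
    have "(\<Sum>k\<in>{\<theta> r0<..n}. a k) \<le> (\<Sum>k=1..n. a k)"
      by (rule sum_mono2) (auto simp: an)
    also have "\<dots> \<le> e * real n" using A nn by simp
    finally show "(\<Sum>k\<in>{\<theta> r0<..n}. a k) \<le> e * real n" .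
    show "(\<Sum>k\<in>{\<theta> r0<..n}. b k) \<le> e * L" using B[of d] unfolding n_def L_def by simp
  qed (use C in simp)
  also have "\<dots> \<le> C * (e * (2 * L) + e * L)" using C e L by (intro mult_left_mono add_mono) auto
  also have "\<dots> = (3/8) * D * L" using C by (simp add: e_def field_simps)
  finally have "D * L \<le> (3/8) * D * L" .
  thus False using D L by (simp add: mult_le_cancel_right)
qed

theorem theorem2p16:
  fixes X :: "nat \<Rightarrow> fuzzy" and \<theta> :: "nat \<Rightarrow> nat" and m :: nat
    and p \<beta> :: real and X1 X2 :: fuzzy
  assumes "\<And>k. fuzzy_number (X k)"
    and "lacunary \<theta>"
    and "0 < p" and "0 < \<beta>" and "\<beta> \<le> 1"
    and "fuzzy_number X1" and "w_limit \<beta> p m X X1"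
    and "fuzzy_number X2" and "N_theta_limit \<theta> \<beta> p m X X2"
    and "limsup (\<lambda>r. ereal (real (\<theta> (Suc r)) / real (\<theta> r) powr \<beta>)) < \<infinity>"
  shows "X1 = X2"
proof (rule ccontr)
  assume ne: "X1 \<noteq> X2"
  have bX: "bnd (X k)" for k using assms(1) by (rule bnd_fuzzy)
  have bY: "bnd (Delta m X k)" for k using bX by (rule bnd_Delta)
  have b1: "bnd X1" using assms(6) by (rule bnd_fuzzy)
  have b2: "bnd X2" using assms(8) by (rule bnd_fuzzy)
  have f0: "fdist X1 X2 \<noteq> 0" using fdist_zero[OF assms(6,8)] ne by blast
  have D: "0 < fdist X1 X2 powr p" using f0 by simp
  have sm: "strict_mono \<theta>" using assms(2) by (simp add: lacunary_def)
  show False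
  proof (rule main_contra[where a="\<lambda>k. fdist (Delta m X k) X1 powr p"
        and b="\<lambda>k. fdist (Delta m X k) X2 powr p" and C="2 powr p" and D="fdist X1 X2 powr p"
        and \<theta>=\<theta> and \<beta>=\<beta>])
    show "fdist X1 X2 powr p \<le> 2 powr p * (fdist (Delta m X k) X1 powr p + fdist (Delta m X k) X2 powr p)" for k
      by (rule pw_ineq[OF bY b1 b2 assms(3)])
    show "(\<lambda>n. 1 / real n powr \<beta> * (\<Sum>k = 1..n. fdist (Delta m X k) X1 powr p)) \<longlonglongrightarrow> 0"
      using assms(7) by (simp add: w_limit_def)
    show "(\<lambda>r. 1 / real (\<theta> (Suc r) - \<theta> r) powr \<beta> *
          (\<Sum>k\<in>{\<theta> r<..\<theta> (Suc r)}. fdist (Delta m X k) X2 powr p)) \<longlonglongrightarrow> 0"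
      using assms(9) by (simp add: N_theta_limit_def)
  qed (use D sm assms(4,5) in auto)
qed

end
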